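(* Let $A$ be the adjacency matrix of a regular network, let $\lambda$ be an eigenvalue of $A$ with $l$-dimensional generalized eigenspace $G_\lambda$ ($l\ge 1$), and for each positive integer $j$ set $N^j=\operatorname{Ker}(A-\lambda I)\cap\operatorname{Im}(A-\lambda I)^{j-1}$. Then for every $1\le k\le l$ and every one-dimensional subspace $J_1$ of $N^k$ which is special in $N^k$, there exists a $k$-dimensional special Jordan subspace to the network (contained in $G_\lambda$) that contains $J_1$.
   Context: A regular network is a finite directed graph on cells $1,\dots,n$ (loops and multiple arrows allowed) in which every cell receives the same number $v$ of arrows (the valency). Its adjacency matrix $A=[a_{ij}]$ has $a_{ij}$ equal to the number of arrows cell $i$ receives from cell $j$; every row sum is $v$. $A$ acts on $\mathbb{C}^n$. A polydiagonal is a subspace of $\mathbb{C}^n$ of the form $\{x : x_i=x_j \text{ for all } (i,j)\in R\}$ for some (possibly empty) set $R$ of index pairs. $F=\{x_1=\cdots=x_n\}$ is the fully synchrony subspace. $P(W)$ is the smallest polydiagonal containing a subspace $W$. For a subspace $E\subseteq\mathbb{C}^n$, a subspace $W\subseteq E$ is special in $E$ if for every subspace $U\subseteq E$ with $\dim U=\dim W$ and $P(U)\subseteq P(W)$ one has $P(U)=P(W)$. The generalized eigenspace of $\lambda$ is $G_\lambda=\operatorname{Ker}(A-\lambda I)^p$ for $p$ large. A Jordan chain of length $k$ for $\lambda$ is a sequence of nonzero vectors $x_1,\dots,x_k$ with $(A-\lambda I)x_1=0$ and $(A-\lambda I)x_i=x_{i-1}$ for $2\le i\le k$; a Jordan subspace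 is the span of a Jordan chain. A Jordan subspace $W$ of a generalized eigenspace $G$ is a special Jordan subspace to the network if for every Jordan subspace $U$ of $G$ with $\dim U=\dim W$ and $P(U)\subseteq P(W)$, either $P(U)=P(W)$ or $U=F$. *)

theory Defs
  imports "HOL-Analysis.Analysis"
begin

text \<open>Networks on a finite set of cells, indexed by a finite type 'n; vectors in C^n are
  complex^'n; subspaces, spans and dimensions are complex-linear (the vec interpretation).\<close>

definition regular_network :: "nat^'n^'n \<Rightarrow> bool" where
  "regular_network A \<longleftrightarrow> (\<exists>v::nat. \<forall>i. (\<Sum>j\<in>UNIV. A$i$j) = v)"

definition cmat :: "nat^'n^'n \<Rightarrow> complex^'n^'n" where
  "cmat A = (\<chi> i j. of_nat (A$i$j))"

definition shifted :: "nat^'n^'n \<Rightarrow> complex \<Rightarrow> complex^'n \<Rightarrow> complex^'n" where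
  "shifted A lam x = cmat A *v x - lam *s x"

definition polydiagonal_of :: "('n \<times> 'n) set \<Rightarrow> (complex^'n) set" where
  "polydiagonal_of R = {x. \<forall>(i,j)\<in>R. x$i = x$j}"

definition is_polydiagonal :: "(complex^'n) set \<Rightarrow> bool" where
  "is_polydiagonal S \<longleftrightarrow> (\<exists>R. S = polydiagonal_of R)"

definition polyP :: "(complex^'n) set \<Rightarrow> (complex^'n) set" where
  "polyP W = \<Inter>{S. is_polydiagonal S \<and> W \<subseteq> S}"

definition full_sync :: "(complex^'n) set" where
  "full_sync = {x. \<forall>i j. x$i = x$j}"

definition special_in :: "(complex^'n) set \<Rightarrow> (complex^'n) set \<Rightarrow> bool" where
  "special_in E W \<longleftrightarrow> vec.subspace W \<and> W \<subseteq> E \<and>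
     (\<forall>U. vec.subspace U \<and> U \<subseteq> E \<and> vec.dim U = vec.dim W \<and> polyP U \<subseteq> polyP W
          \<longrightarrow> polyP U = polyP W)"

definition gen_eigenspace :: "nat^'n^'n \<Rightarrow> complex \<Rightarrow> (complex^'n) set" where
  "gen_eigenspace A lam = {x. \<exists>p. (shifted A lam ^^ p) x = 0}"

definition Nspace :: "nat^'n^'n \<Rightarrow> complex \<Rightarrow> nat \<Rightarrow> (complex^'n) set" where
  "Nspace A lam j = {x. shifted A lam x = 0} \<inter> range (shifted A lam ^^ (j - 1))"

text \<open>Jordan chain x_1,...,x_k given as the list [x_1,...,x_k].\<close>
definition jordan_chain :: "nat^'n^'n \<Rightarrow> complex \<Rightarrow> (complex^'n) list \<Rightarrow> bool" where
  "jordan_chain A lam xs \<longleftrightarrow> xs \<noteq> [] \<and> (\<forall>x\<in>set xs. x \<noteq> 0) \<and>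
     shifted A lam (xs ! 0) = 0 \<and>
     (\<forall>i. 0 < i \<and> i < length xs \<longrightarrow> shifted A lam (xs ! i) = xs ! (i - 1))"

definition jordan_subspace :: "nat^'n^'n \<Rightarrow> complex \<Rightarrow> (complex^'n) set \<Rightarrow> bool" where
  "jordan_subspace A lam W \<longleftrightarrow> (\<exists>xs. jordan_chain A lam xs \<and> W = vec.span (set xs))"

definition special_jordan_subspace :: "nat^'n^'n \<Rightarrow> complex \<Rightarrow> (complex^'n) set \<Rightarrow> bool" where
  "special_jordan_subspace A lam W \<longleftrightarrow> jordan_subspace A lam W \<and>
     (\<forall>U. jordan_subspace A lam U \<and> vec.dim U = vec.dim W \<and> polyP U \<subseteq> polyP W
          \<longrightarrow> polyP U = polyP W \<or> U = full_sync)"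

end

theory Submission
  imports Defs
begin

lemma sh_add: "shifted A lam (x + y) = shifted A lam x + shifted A lam y"
  unfolding shifted_def by (simp add: matrix_vector_right_distrib vector_add_ldistrib algebra_simps)
lemma sh_scale: "shifted A lam (c *s x) = c *s shifted A lam x"
  unfolding shifted_def by (simp add: vec.scale vector_ssub_ldistrib vector_smult_assoc mult.commute)
lemma sh_zero: "shifted A lam 0 = 0"
  using sh_scale[of A lam 0 0] by simp
lemma pw_zero: "(shifted A lam ^^ t) 0 = 0"
  by (induction t) (simp_all add: sh_zero)
lemma pw_add: "(shifted A lam ^^ t) (x + y) = (shifted A lam ^^ t) x + (shifted A lam ^^ t) y"
  by (induction t) (simp_all add: sh_add)
lemma pw_scale: "(shifted A lam ^^ t) (c *s x) = c *s (shifted A lam ^^ t) x"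
  by (induction t) (simp_all add: sh_scale)
lemma pw_diff: "(shifted A lam ^^ t) (x - y) = (shifted A lam ^^ t) x - (shifted A lam ^^ t) y"
  using pw_add[where A=A and lam=lam and t=t and x="x - y" and y=y] by simp
lemma pw_comp: "(shifted A lam ^^ a) ((shifted A lam ^^ b) x) = (shifted A lam ^^ (a + b)) x"
  by (simp add: funpow_add)
lemma pw_vanish: "(shifted A lam ^^ k) x = 0 \<Longrightarrow> k \<le> q \<Longrightarrow> (shifted A lam ^^ q) x = 0"
proof -
  assume a: "(shifted A lam ^^ k) x = 0" "k \<le> q"
  have "(shifted A lam ^^ q) x = (shifted A lam ^^ (q - k)) ((shifted A lam ^^ k) x)"
    using a(2) by (simp add: pw_comp)
  then show ?thesis using a(1) by (simp add: pw_zero)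
qed
lemma ker_subspace: "vec.subspace {v. (shifted A lam ^^ t) v = 0}"
  by (auto simp: vec.subspace_def pw_zero pw_add pw_scale)

lemma polyP_char: "polyP S = {w. \<forall>i j. (\<forall>v\<in>S. v$i = v$j) \<longrightarrow> w$i = w$j}"
proof
  let ?R = "{(i,j). \<forall>v\<in>S. v$i = v$j}"
  have "polydiagonal_of ?R = {w. \<forall>i j. (\<forall>v\<in>S. v$i = v$j) \<longrightarrow> w$i = w$j}"
    unfolding polydiagonal_of_def by auto
  moreover have "is_polydiagonal (polydiagonal_of ?R)" unfolding is_polydiagonal_def by blast
  moreover have "S \<subseteq> polydiagonal_of ?R" unfolding polydiagonal_of_def by auto
  ultimately show "polyP S \<subseteq> {w. \<forall>i j. (\<forall>v\<in>S. v$i = v$j) \<longrightarrow> w$i = w$j}"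
    unfolding polyP_def by (metis (no_types, lifting) Inter_lower mem_Collect_eq)
next
  show "{w. \<forall>i j. (\<forall>v\<in>S. v$i = v$j) \<longrightarrow> w$i = w$j} \<subseteq> polyP S"
  proof (unfold polyP_def, rule Inter_greatest)
    fix X assume "X \<in> {S'. is_polydiagonal S' \<and> S \<subseteq> S'}"
    then obtain R where X: "X = polydiagonal_of R" "S \<subseteq> X" unfolding is_polydiagonal_def by auto
    then have "\<forall>(i,j)\<in>R. \<forall>v\<in>S. v$i = v$j" unfolding polydiagonal_of_def by auto
    then show "{w. \<forall>i j. (\<forall>v\<in>S. v$i = v$j) \<longrightarrow> w$i = w$j} \<subseteq> X"
      unfolding X(1) polydiagonal_of_def by auto
  qed
qed

lemma polyP_sub: "S \<subseteq> polyP S"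
  by (auto simp: polyP_char)
lemma polyP_subspace: "vec.subspace (polyP S)"
  unfolding polyP_char vec.subspace_def by auto metis
lemma polyP_least: "T \<subseteq> polyP S \<Longrightarrow> polyP T \<subseteq> polyP S"
  by (auto simp: polyP_char subset_iff)
lemma polyP_pair: "T \<subseteq> {z. z$i = z$j} \<Longrightarrow> polyP T \<subseteq> {z. z$i = z$j}"
  by (auto simp: polyP_char)
lemma polyP_span: "polyP (vec.span S) = polyP S"
proof -
  have "(\<forall>v\<in>vec.span S. v$i = v$j) \<longleftrightarrow> (\<forall>v\<in>S. v$i = v$j)" for i j
  proof
    assume "\<forall>v\<in>S. v$i = v$j"
    moreover have "vec.subspace {z :: complex^'a. z$i = z$j}" by (auto simp: vec.subspace_def)
    ultimately show "\<forall>v\<in>vec.span S. v$i = v$j"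
      using vec.span_minimal[of S "{z. z$i = z$j}"] by auto
  qed (use vec.span_superset in auto)
  then show ?thesis by (simp add: polyP_char)
qed
definition cs :: "nat^'n^'n \<Rightarrow> complex \<Rightarrow> complex^'n \<Rightarrow> nat \<Rightarrow> (complex^'n) set" where
  "cs A lam y k = (\<lambda>t. (shifted A lam ^^ t) y) ` {..<k}"

lemma cs_Suc: "cs A lam y (Suc k) = insert y (cs A lam (shifted A lam y) k)"
  unfolding cs_def lessThan_Suc_eq_insert_0 image_insert image_image
  by (simp add: funpow_Suc_right del: funpow.simps)

lemma chain_indep:
  "(shifted A lam ^^ k) y \<noteq> 0 \<Longrightarrow> (shifted A lam ^^ Suc k) y = 0 \<Longrightarrow>
   vec.independent (cs A lam y (Suc k)) \<and> card (cs A lam y (Suc k)) = Suc k"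
proof (induction k arbitrary: y)
  case 0
  have "cs A lam y (Suc 0) = {y}" by (auto simp: cs_def)
  then show ?case using 0 by (simp add: vec.independent_insert)
next
  case (Suc k)
  let ?B = "shifted A lam"
  have h1: "(?B ^^ k) (?B y) \<noteq> 0" using Suc.prems(1) by (simp add: funpow_Suc_right del: funpow.simps)
  have h2: "(?B ^^ Suc k) (?B y) = 0" using Suc.prems(2) by (simp add: funpow_Suc_right del: funpow.simps)
  have IH: "vec.independent (cs A lam (?B y) (Suc k))" "card (cs A lam (?B y) (Suc k)) = Suc k"
    using Suc.IH[OF h1 h2] by auto
  have "cs A lam (?B y) (Suc k) \<subseteq> {v. (?B ^^ Suc k) v = 0}"
  proof
    fix v assume "v \<in> cs A lam (?B y) (Suc k)"
    then obtain t where v: "v = (?B ^^ t) (?B y)" unfolding cs_def by auto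
    have "(?B ^^ Suc k) v = (?B ^^ (Suc k + t + 1)) y"
      unfolding v pw_comp by (simp add: funpow_Suc_right del: funpow.simps)
    also have "\<dots> = 0" by (rule pw_vanish[OF Suc.prems(2)]) simp
    finally show "v \<in> {v. (?B ^^ Suc k) v = 0}" by simp
  qed
  then have sp: "vec.span (cs A lam (?B y) (Suc k)) \<subseteq> {v. (?B ^^ Suc k) v = 0}"
    by (rule vec.span_minimal[OF _ ker_subspace])
  have ny: "y \<notin> vec.span (cs A lam (?B y) (Suc k))" using sp Suc.prems(1) by auto
  then have "y \<notin> cs A lam (?B y) (Suc k)" using vec.span_superset by blast
  moreover have "finite (cs A lam (?B y) (Suc k))" unfolding cs_def by simp
  ultimately show ?case using IH ny by (simp add: cs_Suc vec.independent_insert)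
qed

lemma chain_dim:
  assumes "1 \<le> k" "(shifted A lam ^^ (k - 1)) y \<noteq> 0" "(shifted A lam ^^ k) y = 0"
  shows "vec.dim (vec.span (cs A lam y k)) = k"
proof -
  obtain k' where k: "k = Suc k'" using assms(1) by (cases k) auto
  show ?thesis using chain_indep[where A=A and lam=lam and k=k' and y=y] assms unfolding k
    by (simp add: vec.dim_eq_card_independent)
qed

lemma chain_jordan:
  assumes "1 \<le> k" "(shifted A lam ^^ (k - 1)) y \<noteq> 0" "(shifted A lam ^^ k) y = 0"
  shows "jordan_chain A lam (map (\<lambda>m. (shifted A lam ^^ (k - 1 - m)) y) [0..<k])"
    and "set (map (\<lambda>m. (shifted A lam ^^ (k - 1 - m)) y) [0..<k]) = cs A lam y k"
proof -
  let ?B = "shifted A lam"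
  have nz: "(?B ^^ t) y \<noteq> 0" if "t < k" for t
  proof
    assume "(?B ^^ t) y = 0"
    then have "(?B ^^ (k - 1 - t)) ((?B ^^ t) y) = 0" by (simp add: pw_zero)
    then show False using assms(2) that by (simp add: pw_comp)
  qed
  show "jordan_chain A lam (map (\<lambda>m. (?B ^^ (k - 1 - m)) y) [0..<k])"
    unfolding jordan_chain_def
  proof (intro conjI allI impI ballI)
    show "map (\<lambda>m. (?B ^^ (k - 1 - m)) y) [0..<k] \<noteq> []" using assms(1) by simp
    show "x \<noteq> 0" if "x \<in> set (map (\<lambda>m. (?B ^^ (k - 1 - m)) y) [0..<k])" for x
      using that nz by auto
    have e0: "map (\<lambda>m. (?B ^^ (k - 1 - m)) y) [0..<k] ! 0 = (?B ^^ (k - 1)) y"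
      using assms(1) by (simp del: funpow.simps)
    have "?B ((?B ^^ (k - 1)) y) = (?B ^^ Suc (k - 1)) y" by simp
    also have "Suc (k - 1) = k" using assms(1) by simp
    finally show "?B (map (\<lambda>m. (?B ^^ (k - 1 - m)) y) [0..<k] ! 0) = 0"
      using e0 assms(3) by simp
    fix i assume i: "0 < i \<and> i < length (map (\<lambda>m. (?B ^^ (k - 1 - m)) y) [0..<k])"
    then have ki: "k - 1 - (i - 1) = Suc (k - 1 - i)" by auto
    have "map (\<lambda>m. (?B ^^ (k - 1 - m)) y) [0..<k] ! i = (?B ^^ (k - 1 - i)) y"
         "map (\<lambda>m. (?B ^^ (k - 1 - m)) y) [0..<k] ! (i - 1) = (?B ^^ Suc (k - 1 - i)) y"
      using i ki by (simp_all add: nth_upt less_imp_diff_less del: funpow.simps)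
    then show "?B (map (\<lambda>m. (?B ^^ (k - 1 - m)) y) [0..<k] ! i) =
          map (\<lambda>m. (?B ^^ (k - 1 - m)) y) [0..<k] ! (i - 1)"
      by simp
  qed
  show "set (map (\<lambda>m. (?B ^^ (k - 1 - m)) y) [0..<k]) = cs A lam y k"
    unfolding cs_def
  proof
    show "set (map (\<lambda>m. (?B ^^ (k - 1 - m)) y) [0..<k]) \<subseteq> (\<lambda>t. (?B ^^ t) y) ` {..<k}"
      by auto
    show "(\<lambda>t. (?B ^^ t) y) ` {..<k} \<subseteq> set (map (\<lambda>m. (?B ^^ (k - 1 - m)) y) [0..<k])"
    proof
      fix v assume "v \<in> (\<lambda>t. (?B ^^ t) y) ` {..<k}"
      then obtain t where t: "t < k" "v = (?B ^^ t) y" by auto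
      then have "v = (\<lambda>m. (?B ^^ (k - 1 - m)) y) (k - 1 - t)" "k - 1 - t \<in> {0..<k}" by auto
      then show "v \<in> set (map (\<lambda>m. (?B ^^ (k - 1 - m)) y) [0..<k])"
        unfolding set_map set_upt by blast
    qed
  qed
qed
lemma merge:
  fixes S :: "(complex^'n) set"
  assumes S: "vec.subspace S"
    and y: "\<And>t. (shifted A lam ^^ t) y \<in> S" and w: "\<And>t. (shifted A lam ^^ t) w \<in> S"
    and wk: "(shifted A lam ^^ k) w = 0"
    and du: "(shifted A lam ^^ (k - 1)) w $ i \<noteq> (shifted A lam ^^ (k - 1)) w $ j"
    and dx: "(shifted A lam ^^ (k - 1)) y $ i = (shifted A lam ^^ (k - 1)) y $ j"
    and k: "1 \<le> k"
  shows "\<exists>Y. (\<forall>t. (shifted A lam ^^ t) Y \<in> S) \<and>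
     (shifted A lam ^^ (k - 1)) Y = (shifted A lam ^^ (k - 1)) y \<and>
     (\<forall>t<k. (shifted A lam ^^ t) Y $ i = (shifted A lam ^^ t) Y $ j)"
proof -
  let ?B = "shifted A lam"
  have main: "\<exists>Y. (\<forall>t. (?B ^^ t) Y \<in> S) \<and> (?B ^^ (k - 1)) Y = (?B ^^ (k - 1)) y \<and>
      (\<forall>t. k - 1 - m \<le> t \<and> t < k \<longrightarrow> (?B ^^ t) Y $ i = (?B ^^ t) Y $ j)" if "m < k" for m
    using that
  proof (induction m)
    case 0
    show ?case
    proof (rule exI[of _ y], intro conjI allI impI)
      fix t assume "k - 1 - 0 \<le> t \<and> t < k"
      then have "t = k - 1" by auto
      then show "(?B ^^ t) y $ i = (?B ^^ t) y $ j" using dx by simp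
    qed (use y in auto)
  next
    case (Suc m)
    then obtain Y where Y: "\<And>t. (?B ^^ t) Y \<in> S" "(?B ^^ (k - 1)) Y = (?B ^^ (k - 1)) y"
      "\<And>t. k - 1 - m \<le> t \<Longrightarrow> t < k \<Longrightarrow> (?B ^^ t) Y $ i = (?B ^^ t) Y $ j" by auto
    define T where "T = k - 1 - Suc m"
    define d where "d = (?B ^^ T) Y $ i - (?B ^^ T) Y $ j"
    define e where "e = (?B ^^ (k - 1)) w $ i - (?B ^^ (k - 1)) w $ j"
    have e0: "e \<noteq> 0" using du unfolding e_def by simp
    define c where "c = - d / e"
    define Y' where "Y' = Y + c *s (?B ^^ Suc m) w"
    have pY: "(?B ^^ t) Y' = (?B ^^ t) Y + c *s (?B ^^ (t + Suc m)) w" for t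
      unfolding Y'_def pw_add pw_scale pw_comp by simp
    have van: "(?B ^^ (t + Suc m)) w = 0" if "k \<le> t + Suc m" for t
      by (rule pw_vanish[OF wk that])
    show ?case
    proof (rule exI[of _ Y'], intro conjI allI impI)
      fix t show "(?B ^^ t) Y' \<in> S"
        unfolding pY using Y(1)[of t] w[of "t + Suc m"] S
        by (intro vec.subspace_add vec.subspace_scale) auto
    next
      show "(?B ^^ (k - 1)) Y' = (?B ^^ (k - 1)) y"
        unfolding pY using van[of "k - 1"] Y(2) k by simp
    next
      fix t assume t: "k - 1 - Suc m \<le> t \<and> t < k"
      show "(?B ^^ t) Y' $ i = (?B ^^ t) Y' $ j"
      proof (cases "t = T")
        case True
        then have "t + Suc m = k - 1" using Suc.prems unfolding T_def by auto
        then have "(?B ^^ t) Y' $ i - (?B ^^ t) Y' $ j = d + c * e"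
          unfolding pY d_def e_def True by (simp add: algebra_simps)
        also have "\<dots> = 0" unfolding c_def using e0 by (simp add: field_simps)
        finally show ?thesis by simp
      next
        case False
        then have "k - 1 - m \<le> t" "k \<le> t + Suc m" using t Suc.prems unfolding T_def by auto
        then show ?thesis unfolding pY using van Y(3) t by simp
      qed
    qed
  qed
  show ?thesis using main[of "k - 1"] k by auto
qed
lemma chain_struct:
  assumes "jordan_chain A lam us" "i < length us"
  shows "us ! i = (shifted A lam ^^ (length us - 1 - i)) (us ! (length us - 1))"
proof -
  have "\<forall>i. i < length us \<longrightarrow> length us - 1 - i = d \<longrightarrow>
          us ! i = (shifted A lam ^^ d) (us ! (length us - 1))" for d
  proof (induction d)
    case 0
    show ?case
    proof (intro allI impI)
      fix i assume "i < length us" "length us - 1 - i = 0"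
      then have "i = length us - 1" by arith
      then show "us ! i = (shifted A lam ^^ 0) (us ! (length us - 1))" by simp
    qed
  next
    case (Suc d)
    show ?case
    proof (intro allI impI)
      fix i assume i: "i < length us" "length us - 1 - i = Suc d"
      then have "i + 1 < length us" "length us - 1 - (i + 1) = d" by auto
      then have e: "us ! (i + 1) = (shifted A lam ^^ d) (us ! (length us - 1))" using Suc.IH by blast
      have "shifted A lam (us ! (i + 1)) = us ! i"
        using assms(1) \<open>i + 1 < length us\<close> unfolding jordan_chain_def by auto
      then show "us ! i = (shifted A lam ^^ Suc d) (us ! (length us - 1))" using e by simp
    qed
  qed
  then show ?thesis using assms(2) by blast
qed

lemma Nspace_subspace: "vec.subspace (Nspace A lam k)"
proof (rule vec.subspaceI)
  show "0 \<in> Nspace A lam k" unfolding Nspace_def using sh_zero pw_zero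
    by (metis (mono_tags, lifting) IntI mem_Collect_eq rangeI)
next
  fix x y assume "x \<in> Nspace A lam k" "y \<in> Nspace A lam k"
  then obtain a b where h: "shifted A lam x = 0" "shifted A lam y = 0"
    "x = (shifted A lam ^^ (k - 1)) a" "y = (shifted A lam ^^ (k - 1)) b"
    unfolding Nspace_def by auto
  have "shifted A lam (x + y) = 0" using h(1,2) by (simp add: sh_add)
  moreover have "x + y = (shifted A lam ^^ (k - 1)) (a + b)"
    using h(3,4) by (simp add: pw_add)
  ultimately show "x + y \<in> Nspace A lam k" unfolding Nspace_def by auto
next
  fix c x assume "x \<in> Nspace A lam k"
  then obtain a where h: "shifted A lam x = 0" "x = (shifted A lam ^^ (k - 1)) a"
    unfolding Nspace_def by auto
  have "shifted A lam (c *s x) = 0" using h(1) by (simp add: sh_scale)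
  moreover have "c *s x = (shifted A lam ^^ (k - 1)) (c *s a)"
    using h(2) by (simp add: pw_scale)
  ultimately show "c *s x \<in> Nspace A lam k" unfolding Nspace_def by auto
qed

lemma dim_single: "x \<noteq> 0 \<Longrightarrow> vec.dim {x} = 1"
  by (simp add: vec.dim_eq_card_independent vec.independent_insert)

theorem mainTheorem5:
  fixes A :: "nat^'n^'n" and lam :: complex and l k :: nat and J1 :: "(complex^'n) set"
  assumes "regular_network A"
    and "\<exists>x. x \<noteq> 0 \<and> cmat A *v x = lam *s x"
    and "l = vec.dim (gen_eigenspace A lam)" and "l \<ge> 1"
    and "1 \<le> k" and "k \<le> l"
    and "vec.subspace J1" and "J1 \<subseteq> Nspace A lam k" and "vec.dim J1 = 1"
    and "special_in (Nspace A lam k) J1"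
  shows "\<exists>W. special_jordan_subspace A lam W \<and> vec.dim W = k \<and>
             W \<subseteq> gen_eigenspace A lam \<and> J1 \<subseteq> W"
proof -
  let ?B = "shifted A lam"
  have k1: "1 \<le> k" by fact
  have ksuc: "Suc (k - 1) = k" using k1 by simp
  obtain x1 where x1: "x1 \<in> J1" "x1 \<noteq> 0"
    using assms(9) vec.dim_eq_0[of J1] by auto
  have dimx: "vec.dim {x1} = 1" using x1(2) by (rule dim_single)
  have J1eq: "J1 = vec.span {x1}"
  proof -
    have "vec.span {x1} = vec.span J1"
      by (rule vec.dim_eq_span) (use x1 assms(9) dimx in auto)
    then show ?thesis using assms(7) vec.span_eq_iff by metis
  qed
  have x1N: "x1 \<in> Nspace A lam k" using x1 assms(8) by auto
  then have Bx1: "?B x1 = 0" unfolding Nspace_def by auto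
  obtain y0 where y0: "(?B ^^ (k - 1)) y0 = x1" using x1N unfolding Nspace_def by auto
  define mu where "mu y = vec.dim (polyP (vec.span (cs A lam y k)))" for y
  obtain y where y: "(?B ^^ (k - 1)) y = x1"
    and ymin: "\<And>y'. (?B ^^ (k - 1)) y' = x1 \<Longrightarrow> mu y \<le> mu y'"
    using ex_has_least_nat[of "\<lambda>y. (?B ^^ (k - 1)) y = x1" y0 mu] y0 by blast
  have yk: "(?B ^^ k) y = 0"
  proof -
    have "(?B ^^ k) y = (?B ^^ Suc (k - 1)) y" using ksuc by simp
    also have "\<dots> = ?B x1" using y by simp
    finally show ?thesis using Bx1 by simp
  qed
  have ynz: "(?B ^^ (k - 1)) y \<noteq> 0" using y x1 by simp
  define W where "W = vec.span (cs A lam y k)"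
  have PWsub: "vec.subspace (polyP W)" by (rule polyP_subspace)
  have spanP: "vec.span (polyP X) = polyP X" for X
    using polyP_subspace[of X] vec.span_eq_iff by metis
  have helper: False if "(?B ^^ (k - 1)) Y = x1" "polyP (vec.span (cs A lam Y k)) \<subset> polyP W" for Y
  proof -
    have "vec.dim (polyP (vec.span (cs A lam Y k))) < vec.dim (polyP W)"
      by (rule vec.dim_psubset) (simp add: spanP that(2))
    then have "mu Y < mu y" unfolding mu_def W_def by simp
    with ymin[OF that(1)] show False by simp
  qed
  have csW: "cs A lam y k \<subseteq> W" unfolding W_def by (rule vec.span_superset)
  have yS: "(?B ^^ t) y \<in> polyP W" for t
  proof (cases "t < k")
    case True
    then have "(?B ^^ t) y \<in> W" using csW unfolding cs_def by auto
    then show ?thesis using polyP_sub by blast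
  next
    case False
    then have "(?B ^^ t) y = 0" using pw_vanish[OF yk] by simp
    then show ?thesis using PWsub by (simp add: vec.subspace_0)
  qed
  have jW: "jordan_subspace A lam W"
    unfolding jordan_subspace_def W_def
    using chain_jordan[OF k1 ynz yk] by metis
  have dW: "vec.dim W = k" unfolding W_def by (rule chain_dim[OF k1 ynz yk])
  have Wgen: "W \<subseteq> gen_eigenspace A lam"
  proof -
    have "cs A lam y k \<subseteq> {v. (?B ^^ k) v = 0}"
    proof
      fix v assume "v \<in> cs A lam y k"
      then obtain t where v: "v = (?B ^^ t) y" unfolding cs_def by auto
      have "(?B ^^ k) v = (?B ^^ (k + t)) y" unfolding v pw_comp by simp
      also have "\<dots> = 0" by (rule pw_vanish[OF yk]) simp
      finally show "v \<in> {v. (?B ^^ k) v = 0}" by simp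
    qed
    then have "W \<subseteq> {v. (?B ^^ k) v = 0}" unfolding W_def
      by (rule vec.span_minimal[OF _ ker_subspace])
    then show ?thesis unfolding gen_eigenspace_def by auto
  qed
  have J1W: "J1 \<subseteq> W"
  proof -
    have "x1 \<in> cs A lam y k" unfolding cs_def using y k1 by (auto intro!: image_eqI[of _ _ "k - 1"])
    then have "{x1} \<subseteq> cs A lam y k" by simp
    then show ?thesis unfolding J1eq W_def by (rule vec.span_mono)
  qed
  have special: "polyP U = polyP W"
    if U: "jordan_subspace A lam U" "vec.dim U = vec.dim W" "polyP U \<subseteq> polyP W" for U
  proof (rule ccontr)
    assume neq: "polyP U \<noteq> polyP W"
    then have psub: "polyP U \<subset> polyP W" using U(3) by auto
    obtain us where us: "jordan_chain A lam us" "U = vec.span (set us)"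
      using U(1) unfolding jordan_subspace_def by auto
    define L where "L = length us"
    have L1: "1 \<le> L" using us(1) unfolding jordan_chain_def L_def by (cases us) auto
    define z where "z = us ! (L - 1)"
    have st: "us ! i = (?B ^^ (L - 1 - i)) z" if "i < L" for i
    proof -
      have "i < length us" using that unfolding L_def .
      from chain_struct[OF us(1) this] show ?thesis unfolding L_def z_def .
    qed
    have kL: "k \<le> L"
    proof -
      have "vec.dim U = vec.dim (set us)" unfolding us(2) by simp
      also have "\<dots> \<le> card (set us)" by (rule vec.dim_le_card) (use vec.span_superset in blast)+
      also have "\<dots> \<le> L" unfolding L_def by (rule card_length)
      finally show ?thesis using U(2) dW by simp
    qed
    have us0: "us ! 0 \<in> set us" using L1 unfolding L_def by (cases us) auto
    have u0nz: "us ! 0 \<noteq> 0" using us0 us(1) unfolding jordan_chain_def by blast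
    have Bus0: "?B (us ! 0) = 0" using us(1) unfolding jordan_chain_def by blast
    have zL1: "(?B ^^ (L - 1)) z = us ! 0" using st[of 0] L1 by simp
    have zL: "(?B ^^ L) z = 0"
    proof -
      have "(?B ^^ L) z = (?B ^^ Suc (L - 1)) z" using L1 by simp
      also have "\<dots> = ?B (us ! 0)" using zL1 by simp
      finally show ?thesis using Bus0 by simp
    qed
    define w where "w = (?B ^^ (L - k)) z"
    have Bw: "(?B ^^ t) w = (?B ^^ (t + (L - k))) z" for t unfolding w_def pw_comp by simp
    have subU: "vec.subspace U" unfolding us(2) by (rule vec.subspace_span)
    have wU: "(?B ^^ t) w \<in> U" for t
    proof (cases "t < k")
      case True
      then have "(?B ^^ t) w = us ! (k - 1 - t)" using st[of "k - 1 - t"] kL Bw[of t]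
        by (simp add: algebra_simps)
      moreover have "us ! (k - 1 - t) \<in> set us" using kL True unfolding L_def by simp
      ultimately show ?thesis unfolding us(2) using vec.span_superset by (metis subsetD)
    next
      case False
      then have "(?B ^^ t) w = 0" unfolding Bw using pw_vanish[OF zL] kL by simp
      then show ?thesis using subU by (simp add: vec.subspace_0)
    qed
    have wS: "(?B ^^ t) w \<in> polyP W" for t using wU[of t] polyP_sub[of U] U(3) by blast
    define u1 where "u1 = (?B ^^ (k - 1)) w"
    have "k - 1 + (L - k) = L - 1" using kL k1 by arith
    then have u1eq: "u1 = us ! 0" unfolding u1_def Bw using zL1 by simp
    have u1nz: "u1 \<noteq> 0" using u1eq u0nz by simp
    have Bu1: "?B u1 = 0" using u1eq Bus0 by simp
    have wk: "(?B ^^ k) w = 0"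
    proof -
      have "(?B ^^ k) w = (?B ^^ Suc (k - 1)) w" using ksuc by simp
      also have "\<dots> = ?B u1" unfolding u1_def by simp
      finally show ?thesis using Bu1 by simp
    qed
    show False
    proof (cases "\<exists>i j. x1 $ i = x1 $ j \<and> u1 $ i \<noteq> u1 $ j")
      case True
      then obtain i j where ij: "x1 $ i = x1 $ j" "u1 $ i \<noteq> u1 $ j" by blast
      obtain Y where Y: "\<And>t. (?B ^^ t) Y \<in> polyP W" "(?B ^^ (k - 1)) Y = (?B ^^ (k - 1)) y"
        "\<And>t. t < k \<Longrightarrow> (?B ^^ t) Y $ i = (?B ^^ t) Y $ j"
        using merge[OF PWsub yS wS wk, of i j] ij y k1 unfolding u1_def by auto
      have csY: "cs A lam Y k \<subseteq> polyP W" "cs A lam Y k \<subseteq> {v. v $ i = v $ j}"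
        using Y(1,3) unfolding cs_def by auto
      have "polyP (vec.span (cs A lam Y k)) \<subseteq> polyP W"
        unfolding polyP_span using polyP_least[OF csY(1)] .
      moreover have "polyP (vec.span (cs A lam Y k)) \<subseteq> {v. v $ i = v $ j}"
        unfolding polyP_span using polyP_pair[OF csY(2)] .
      moreover have "u1 \<in> polyP W" unfolding u1_def by (rule wS)
      ultimately have "polyP (vec.span (cs A lam Y k)) \<subset> polyP W" using ij(2) by auto
      then show False using helper Y(2) y by simp
    next
      case False
      then have cB: "\<And>i j. x1 $ i = x1 $ j \<Longrightarrow> u1 $ i = u1 $ j" by blast
      obtain c where c: "u1 = c *s x1"
      proof (cases "\<exists>i j. x1 $ i \<noteq> x1 $ j")
        case True
        then obtain i j where ij: "x1 $ i \<noteq> x1 $ j" by blast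
        define a where "a = u1 $ i - u1 $ j"
        define b where "b = x1 $ i - x1 $ j"
        have b0: "b \<noteq> 0" using ij unfolding b_def by simp
        define zz where "zz = a *s x1 - b *s u1"
        show ?thesis
        proof (cases "zz = 0")
          case True
          have "u1 = (a / b) *s x1"
          proof (subst vec_eq_iff, intro allI)
            fix m
            have "zz $ m = 0" using True by simp
            then have "a * x1 $ m = b * u1 $ m" unfolding zz_def by simp
            then show "u1 $ m = ((a / b) *s x1) $ m" using b0 by (simp add: field_simps)
          qed
          then show ?thesis using that by blast
        next
          case False
          have zzN: "zz \<in> Nspace A lam k"
          proof -
            have "?B zz = a *s ?B x1 - b *s ?B u1" unfolding zz_def
              using pw_diff[where A=A and lam=lam and t=1 and x="a *s x1" and y="b *s u1"]
              by (simp add: sh_scale)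
            then have "?B zz = 0" using Bx1 Bu1 by simp
            moreover have "zz = (?B ^^ (k - 1)) (a *s y - b *s w)"
              unfolding zz_def u1_def using y by (simp add: pw_diff pw_scale)
            ultimately show ?thesis unfolding Nspace_def by auto
          qed
          have sub1: "vec.span {zz} \<subseteq> Nspace A lam k"
            by (rule vec.span_minimal) (use zzN Nspace_subspace in auto)
          have dim1: "vec.dim (vec.span {zz}) = vec.dim J1"
            using dim_single[OF False] assms(9) by simp
          have zzP: "zz \<in> polyP {x1}" unfolding polyP_char
          proof (intro CollectI allI impI)
            fix i' j' assume "\<forall>v\<in>{x1}. v $ i' = v $ j'"
            then have "x1 $ i' = x1 $ j'" by simp
            moreover then have "u1 $ i' = u1 $ j'" by (rule cB)
            ultimately show "zz $ i' = zz $ j'" unfolding zz_def by simp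
          qed
          have "polyP (vec.span {zz}) \<subseteq> polyP J1"
            unfolding J1eq polyP_span by (rule polyP_least) (use zzP in auto)
          then have eq: "polyP (vec.span {zz}) = polyP J1"
            using assms(10) sub1 dim1 unfolding special_in_def
            by (meson vec.subspace_span)
          have "zz $ i = zz $ j" unfolding zz_def a_def b_def by (simp add: algebra_simps)
          then have "polyP {zz} \<subseteq> {v. v $ i = v $ j}" by (intro polyP_pair) auto
          moreover have "x1 \<in> polyP J1" using x1(1) polyP_sub by blast
          moreover have "polyP J1 = polyP {zz}" using eq polyP_span by metis
          ultimately have "x1 $ i = x1 $ j" by blast
          then show ?thesis using ij by simp
        qed
      next
        case False
        then have allx: "\<And>i j. x1 $ i = x1 $ j" by blast
        define i0 :: 'n where "i0 = undefined"
        have xi0: "x1 $ i0 \<noteq> 0"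
        proof
          assume "x1 $ i0 = 0"
          then have "x1 = 0" unfolding vec_eq_iff using allx by (metis zero_index)
          then show False using x1(2) by simp
        qed
        have "u1 = (u1 $ i0 / x1 $ i0) *s x1" unfolding vec_eq_iff
        proof
          fix m
          have "x1 $ m = x1 $ i0" by (rule allx)
          moreover then have "u1 $ m = u1 $ i0" by (rule cB)
          ultimately show "u1 $ m = ((u1 $ i0 / x1 $ i0) *s x1) $ m" using xi0 by simp
        qed
        then show ?thesis using that by blast
      qed
      have c0: "c \<noteq> 0" using c u1nz by auto
      define Y where "Y = (1 / c) *s w"
      have YP: "(?B ^^ (k - 1)) Y = x1" unfolding Y_def pw_scale u1_def[symmetric] c
        using c0 by (simp add: vector_smult_assoc)
      have "cs A lam Y k \<subseteq> U"
        unfolding cs_def Y_def pw_scale using wU subU by (auto intro: vec.subspace_scale)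
      then have "cs A lam Y k \<subseteq> polyP U" using polyP_sub by blast
      then have "polyP (vec.span (cs A lam Y k)) \<subseteq> polyP U"
        unfolding polyP_span by (rule polyP_least)
      then have "polyP (vec.span (cs A lam Y k)) \<subset> polyP W" using psub by blast
      then show False using helper YP by simp
    qed
  qed
  show ?thesis
  proof (intro exI[of _ W] conjI)
    show "special_jordan_subspace A lam W"
      unfolding special_jordan_subspace_def using jW special by blast
  qed (use dW Wgen J1W in auto)
qed

end
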